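(* Let $f:X\to S$ be a morphism of fine log schemes of characteristic $p$. If $D=(\delta,\partial):(\mathcal M_X,\mathcal O_X)\to\mathcal O_X$ is a log derivation over $S$, then so is $D^{(p)}:=(\partial^{p-1}\circ\delta+F_X^*\circ\delta,\ \partial^{(p)})$.
   Context: A log derivation of $X$ over $S$ is a pair $(\delta,\partial)$ with $\partial:\mathcal O_X\to\mathcal O_X$ an $\mathcal O_S$-linear derivation and $\delta:\mathcal M_X\to\mathcal O_X$ a monoid homomorphism (to the additive group) vanishing on the image of $f^{-1}\mathcal M_S$ and satisfying $\partial(\alpha(m))=\alpha(m)\delta(m)$ for $m\in\mathcal M_X$. Here $\partial^{(p)}:=\partial^p$ (the $p$-fold iterate), $\partial^{p-1}\circ\delta$ is $m\mapsto\partial^{p-1}(\delta(m))$, and $F_X^*\circ\delta$ is $m\mapsto\delta(m)^p$. *)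

theory Defs
  imports Main "HOL-Computational_Algebra.Primes"
begin

text \<open>Local (section-level) model of a morphism of log schemes f : X \<rightarrow> S.
  'a : the ring of sections of O_X, 'b : sections of O_S, phi : f-sharp : O_S \<rightarrow> O_X,
  'm : sections of M_X (written multiplicatively), alpha : M_X \<rightarrow> O_X the structure map,
  'n : sections of M_S, beta : M_S \<rightarrow> M_X the induced map, alphaS : M_S \<rightarrow> O_S.\<close>

definition is_log_structure :: "('m::comm_monoid_mult \<Rightarrow> 'a::comm_ring_1) \<Rightarrow> bool" where
  "is_log_structure alpha \<longleftrightarrow>
     alpha 1 = 1 \<and> (\<forall>m n. alpha (m * n) = alpha m * alpha n) \<and>
     bij_betw alpha {m. alpha m dvd 1} {u. u dvd 1}"

definition log_morphism_data ::
  "('b::comm_ring_1 \<Rightarrow> 'a::comm_ring_1) \<Rightarrow> ('m::comm_monoid_mult \<Rightarrow> 'a) \<Rightarrow>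
   ('n::comm_monoid_mult \<Rightarrow> 'b) \<Rightarrow> ('n \<Rightarrow> 'm) \<Rightarrow> bool" where
  "log_morphism_data phi alpha alphaS beta \<longleftrightarrow>
     phi 1 = 1 \<and> (\<forall>x y. phi (x + y) = phi x + phi y) \<and> (\<forall>x y. phi (x * y) = phi x * phi y) \<and>
     is_log_structure alpha \<and> is_log_structure alphaS \<and>
     beta 1 = 1 \<and> (\<forall>m n. beta (m * n) = beta m * beta n) \<and>
     (\<forall>n. alpha (beta n) = phi (alphaS n))"

definition log_derivation ::
  "('b::comm_ring_1 \<Rightarrow> 'a::comm_ring_1) \<Rightarrow> ('m::comm_monoid_mult \<Rightarrow> 'a) \<Rightarrow>
   ('n::comm_monoid_mult \<Rightarrow> 'm) \<Rightarrow> ('m \<Rightarrow> 'a) \<Rightarrow> ('a \<Rightarrow> 'a) \<Rightarrow> bool" where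
  "log_derivation phi alpha beta delta D \<longleftrightarrow>
     (\<forall>x y. D (x + y) = D x + D y) \<and>
     (\<forall>b x. D (phi b * x) = phi b * D x) \<and>
     (\<forall>x y. D (x * y) = x * D y + y * D x) \<and>
     delta 1 = 0 \<and> (\<forall>m n. delta (m * n) = delta m + delta n) \<and>
     (\<forall>n. delta (beta n) = 0) \<and>
     (\<forall>m. D (alpha m) = alpha m * delta m)"

end

theory Submission imports Defs begin

locale der =
  fixes D :: "'a::comm_ring_1 \<Rightarrow> 'a"
  assumes add: "\<And>x y. D (x + y) = D x + D y"
    and leib: "\<And>x y. D (x * y) = x * D y + y * D x"
begin

lemma D0[simp]: "D 0 = 0"
  using add[of 0 0] by simp

lemma D1[simp]: "D 1 = 0"
proof -
  have "D 1 = D 1 + D 1" using leib[of 1 1] by simp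
  thus ?thesis by simp
qed

lemma D_sum: "D (\<Sum>k\<in>A. f k) = (\<Sum>k\<in>A. D (f k))"
  by (induction A rule: infinite_finite_induct) (auto simp: add)

lemma D_ofnat: "D (of_nat k * x) = of_nat k * D x"
  by (induction k) (auto simp: add distrib_right)

lemma D_ofnat1[simp]: "D (of_nat k) = 0"
  using D_ofnat[of k 1] by simp

lemma Dn_add: "(D ^^ n) (x + y) = (D ^^ n) x + (D ^^ n) y"
  by (induction n) (auto simp: add)

lemma Dn0[simp]: "(D ^^ n) 0 = 0"
  by (induction n) auto

lemma pascal_gen:
  fixes a :: "nat \<Rightarrow> nat \<Rightarrow> 'b::comm_ring_1"
  shows "(\<Sum>k\<le>n. of_nat (n choose k) * (a (Suc k) (n-k) + a k (Suc n - k)))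
       = (\<Sum>k\<le>Suc n. of_nat (Suc n choose k) * a k (Suc n - k))"
proof -
  define f where "f k = of_nat (n choose k) * a k (Suc n - k)" for k
  have f: "(\<Sum>k\<le>n. f k) = a 0 (Suc n) + (\<Sum>k\<le>n. of_nat (n choose Suc k) * a (Suc k) (n - k))"
  proof -
    have "(\<Sum>k\<le>n. f k) = (\<Sum>k\<le>Suc n. f k)" by (simp add: f_def binomial_eq_0)
    also have "\<dots> = f 0 + (\<Sum>k\<le>n. f (Suc k))" by (rule sum.atMost_Suc_shift)
    finally show ?thesis by (simp add: f_def)
  qed
  have "(\<Sum>k\<le>Suc n. of_nat (Suc n choose k) * a k (Suc n - k))
      = a 0 (Suc n) + (\<Sum>k\<le>n. of_nat (Suc n choose Suc k) * a (Suc k) (n - k))"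
    by (subst sum.atMost_Suc_shift) simp
  also have "\<dots> = a 0 (Suc n) + (\<Sum>k\<le>n. of_nat (n choose k) * a (Suc k) (n - k))
        + (\<Sum>k\<le>n. of_nat (n choose Suc k) * a (Suc k) (n - k))"
    by (simp add: sum.distrib distrib_right)
  also have "\<dots> = (\<Sum>k\<le>n. of_nat (n choose k) * a (Suc k) (n - k)) + (\<Sum>k\<le>n. f k)"
    by (simp add: f)
  also have "\<dots> = (\<Sum>k\<le>n. of_nat (n choose k) * (a (Suc k) (n-k) + a k (Suc n - k)))"
    by (simp add: f_def sum.distrib distrib_left)
  finally show ?thesis by simp
qed

lemma leibniz:
  "(D ^^ n) (x * y) = (\<Sum>k\<le>n. of_nat (n choose k) * ((D ^^ k) x * (D ^^ (n - k)) y))"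
proof (induction n)
  case 0 then show ?case by simp
next
  case (Suc n)
  have "(D ^^ Suc n) (x * y) = D (\<Sum>k\<le>n. of_nat (n choose k) * ((D ^^ k) x * (D ^^ (n - k)) y))"
    using Suc by simp
  also have "\<dots> = (\<Sum>k\<le>n. of_nat (n choose k) * ((D ^^ Suc k) x * (D ^^ (n - k)) y
         + (D ^^ k) x * (D ^^ (Suc n - k)) y))"
    by (auto simp: D_sum D_ofnat leib Suc_diff_le algebra_simps intro!: sum.cong)
  also have "\<dots> = (\<Sum>k\<le>Suc n. of_nat (Suc n choose k) * ((D ^^ k) x * (D ^^ (Suc n - k)) y))"
    using pascal_gen[of n "\<lambda>k m. (D ^^ k) x * (D ^^ m) y"] by simp
  finally show ?case .
qed

definition Tm :: "'a \<Rightarrow> (nat \<Rightarrow> 'a) \<Rightarrow> nat \<Rightarrow> 'a" where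
  "Tm u f = (\<lambda>j. D (f j) + (if j = 0 then 0 else u * f (j - 1)))"
definition e0 :: "nat \<Rightarrow> 'a" where "e0 = (\<lambda>j. if j = 0 then 1 else 0)"
definition Dt :: "(nat \<Rightarrow> 'a) \<Rightarrow> nat \<Rightarrow> 'a" where
  "Dt f = (\<lambda>j. of_nat (Suc j) * f (Suc j))"
definition Q :: "'a \<Rightarrow> nat \<Rightarrow> nat \<Rightarrow> 'a" where "Q u n = (Tm u ^^ n) e0"
primrec S :: "'a \<Rightarrow> nat \<Rightarrow> nat \<Rightarrow> 'a" where
  "S u 0 = (\<lambda>j. 0)"
| "S u (Suc n) = (\<lambda>j. Tm u (S u n) j + u * Q u n j)"

lemma Q_Suc: "Q u (Suc n) = Tm u (Q u n)" by (simp add: Q_def)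
lemma Q_0: "Q u 0 = e0" by (simp add: Q_def)

lemma lemA: "Dt (Tm u f) = (\<lambda>j. Tm u (Dt f) j + u * f j)"
proof
  fix j show "Dt (Tm u f) j = Tm u (Dt f) j + u * f j"
    unfolding Dt_def Tm_def D_ofnat add by (cases j) (auto simp: algebra_simps)
qed

lemma lemB: "Dt (Q u n) = S u n"
proof (induction n)
  case 0 show ?case by (auto simp: Dt_def Q_0 e0_def)
next
  case (Suc n) show ?case using Suc by (simp add: Q_Suc lemA)
qed

lemma Tm_sum: "Tm u (\<lambda>j. \<Sum>k\<in>A. of_nat (c k) * (d k * g k j)) j
   = (\<Sum>k\<in>A. of_nat (c k) * (D (d k) * g k j + d k * Tm u (g k) j))"
  by (auto simp: Tm_def D_sum D_ofnat leib sum.distrib sum_distrib_left algebra_simps)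

definition dd :: "'a \<Rightarrow> nat \<Rightarrow> 'a" where
  "dd u k = (if k = 0 then 0 else (D ^^ (k - 1)) u)"

lemma S_closed: "S u n j = (\<Sum>k\<le>n. of_nat (n choose k) * (dd u k * Q u (n - k) j))"
proof (induction n arbitrary: j)
  case 0 show ?case by (simp add: dd_def)
next
  case (Suc n)
  have e: "S u n = (\<lambda>j. \<Sum>k\<le>n. of_nat (n choose k) * (dd u k * Q u (n - k) j))"
    using Suc by auto
  have Dd: "D (dd u k) = dd u (Suc k) - (if k = 0 then u else 0)" for k
    by (cases k) (auto simp: dd_def)
  have "S u (Suc n) j = Tm u (S u n) j + u * Q u n j" by simp
  also have "Tm u (S u n) j = (\<Sum>k\<le>n. of_nat (n choose k) * (D (dd u k) * Q u (n-k) j + dd u k * Q u (Suc n - k) j))"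
    unfolding e Tm_sum by (auto simp: Q_Suc Suc_diff_le intro!: sum.cong)
  also have "\<dots> = (\<Sum>k\<le>n. of_nat (n choose k) * (dd u (Suc k) * Q u (n-k) j + dd u k * Q u (Suc n - k) j))
        - (\<Sum>k\<le>n. (if k = 0 then u * Q u n j else 0))"
  proof -
    have "\<And>k. k \<in> {..n} \<Longrightarrow> of_nat (n choose k) * (D (dd u k) * Q u (n-k) j + dd u k * Q u (Suc n - k) j)
       = of_nat (n choose k) * (dd u (Suc k) * Q u (n-k) j + dd u k * Q u (Suc n - k) j)
          - (if k = 0 then u * Q u n j else 0)"
      by (case_tac k) (auto simp: dd_def algebra_simps)
    then have "(\<Sum>k\<le>n. of_nat (n choose k) * (D (dd u k) * Q u (n-k) j + dd u k * Q u (Suc n - k) j))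
      = (\<Sum>k\<le>n. of_nat (n choose k) * (dd u (Suc k) * Q u (n-k) j + dd u k * Q u (Suc n - k) j)
          - (if k = 0 then u * Q u n j else 0))" by (rule sum.cong[OF refl])
    then show ?thesis by (simp only: sum_subtractf)
  qed
  also have "(\<Sum>k\<le>n. (if k = 0 then u * Q u n j else 0)) = u * Q u n j"
    by simp
  finally show ?case
    using pascal_gen[of n "\<lambda>k m. dd u k * Q u m j"] by simp
qed

lemma Q_zero: "n \<ge> 1 \<Longrightarrow> Q u n 0 = 0"
proof (induction n)
  case 0 then show ?case by simp
next
  case (Suc n) then show ?case
    by (cases n) (auto simp: Q_Suc Q_0 Tm_def e0_def)
qed

lemma Q_high: "j > n \<Longrightarrow> Q u n j = 0"
proof (induction n arbitrary: j)
  case 0 then show ?case by (simp add: Q_0 e0_def)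
next
  case (Suc n) then show ?case by (auto simp: Q_Suc Tm_def)
qed

lemma Q_diag: "Q u n n = u ^ n"
proof (induction n)
  case 0 then show ?case by (simp add: Q_0 e0_def)
next
  case (Suc n) then show ?case by (auto simp: Q_Suc Tm_def Q_high)
qed

lemma Dn_eval:
  assumes "D a = a * u"
  shows "(D ^^ n) a = a * (\<Sum>j\<le>n. Q u n j)"
proof (induction n)
  case 0 then show ?case by (simp add: Q_0 e0_def)
next
  case (Suc n)
  have "(D ^^ Suc n) a = a * D (\<Sum>j\<le>n. Q u n j) + (\<Sum>j\<le>n. Q u n j) * (a * u)"
    using Suc assms by (simp add: leib)
  also have "\<dots> = a * ((\<Sum>j\<le>n. D (Q u n j)) + (\<Sum>j\<le>n. u * Q u n j))"
    by (simp add: D_sum sum_distrib_left algebra_simps)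
  also have "(\<Sum>j\<le>n. D (Q u n j)) = (\<Sum>j\<le>Suc n. D (Q u n j))"
    by (simp add: Q_high)
  also have "(\<Sum>j\<le>n. u * Q u n j) = (\<Sum>j\<le>Suc n. (if j = 0 then 0 else u * Q u n (j - 1)))"
    by (subst sum.atMost_Suc_shift) simp
  finally show ?case
    by (simp add: Q_Suc Tm_def sum.distrib)
qed

end

locale charp = der D for D :: "'a::comm_ring_1 \<Rightarrow> 'a" +
  fixes p :: nat
  assumes pr: "prime p" and pz: "of_nat p = (0::'a)"
begin

lemma p2: "p \<ge> 2" using pr prime_ge_2_nat by blast

lemma choose_zero: "0 < k \<Longrightarrow> k < p \<Longrightarrow> of_nat (p choose k) = (0::'a)"
proof -
  assume "0 < k" "k < p"
  then have "p dvd (p choose k)" using dvd_choose_prime pr by auto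
  then obtain m where "p choose k = p * m" by blast
  then show ?thesis by (simp add: pz)
qed

lemma cancel:
  assumes "0 < k" "k < p" "of_nat k * x = (0::'a)"
  shows "x = 0"
proof -
  have "coprime k p"
  proof -
    have "\<not> p dvd k" using assms by (auto dest: dvd_imp_le)
    then have "coprime p k" using pr prime_imp_coprime_nat by blast
    then show ?thesis by (simp add: coprime_commute)
  qed
  then have g: "gcd k p = 1" by simp
  obtain a b where ab: "k * a = p * b + gcd k p" using bezout_nat[of k p] assms by auto
  then have "k * a = p * b + 1" using g by simp
  then have "of_nat (k * a) * x = (of_nat p * of_nat b + 1) * x"
    by (metis of_nat_1 of_nat_add of_nat_mult)
  then have "of_nat a * (of_nat k * x) = x" by (simp add: pz algebra_simps)
  then show ?thesis using assms by simp
qed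

lemma S_p: "S u p j = (D ^^ (p - 1)) u * e0 j"
proof -
  have "S u p j = (\<Sum>k\<le>p. if k = p then (D ^^ (p - 1)) u * e0 j else 0)"
    unfolding S_closed
  proof (rule sum.cong[OF refl])
    fix k assume "k \<in> {..p}"
    then show "of_nat (p choose k) * (dd u k * Q u (p - k) j) =
      (if k = p then (D ^^ (p - 1)) u * e0 j else 0)"
      using p2 by (cases "k = 0"; cases "k = p") (auto simp: dd_def choose_zero Q_0)
  qed
  then show ?thesis by simp
qed

lemma Q_p: "j \<le> p \<Longrightarrow> Q u p j = (if j = 1 then (D ^^ (p - 1)) u else 0) + (if j = p then u ^ p else 0)"
proof -
  assume jp: "j \<le> p"
  have key: "of_nat (Suc i) * Q u p (Suc i) = (D ^^ (p - 1)) u * e0 i" for i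
    using fun_cong[OF lemB[of u p], of i] S_p by (simp add: Dt_def)
  consider "j = 0" | "j = 1" | "j = p" | "2 \<le> j" "j < p" using jp p2 by linarith
  then show ?thesis
  proof cases
    case 1 then show ?thesis using Q_zero[of p u] p2 by simp
  next
    case 2 then show ?thesis using key[of 0] p2 by (simp add: e0_def)
  next
    case 3 then show ?thesis using Q_diag p2 by simp
  next
    case 4
    then obtain i where i: "j = Suc i" "i \<ge> 1" by (cases j) auto
    have "of_nat (Suc i) * Q u p (Suc i) = 0" using key[of i] i by (simp add: e0_def)
    then have "Q u p j = 0" using cancel[of "Suc i"] i 4 by simp
    then show ?thesis using 4 by simp
  qed
qed

lemma hoch:
  assumes "D a = a * u"
  shows "(D ^^ p) a = a * ((D ^^ (p - 1)) u + u ^ p)"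
proof -
  have "(\<Sum>j\<le>p. Q u p j) = (\<Sum>j\<le>p. (if j = 1 then (D ^^ (p - 1)) u else 0) + (if j = p then u ^ p else 0))"
    by (rule sum.cong) (auto simp: Q_p)
  also have "\<dots> = (D ^^ (p - 1)) u + u ^ p" using p2 by (simp add: sum.distrib)
  finally show ?thesis using Dn_eval[OF assms, of p] by simp
qed

lemma leib_p: "(D ^^ p) (x * y) = x * (D ^^ p) y + y * (D ^^ p) x"
proof -
  have "(D ^^ p) (x * y) = (\<Sum>k\<le>p. if k = 0 then x * (D ^^ p) y else if k = p then y * (D ^^ p) x else 0)"
    unfolding leibniz
  proof (rule sum.cong[OF refl])
    fix k assume "k \<in> {..p}"
    then show "of_nat (p choose k) * ((D ^^ k) x * (D ^^ (p - k)) y) =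
      (if k = 0 then x * (D ^^ p) y else if k = p then y * (D ^^ p) x else 0)"
      using p2 by (cases "k = 0"; cases "k = p") (auto simp: choose_zero mult.commute)
  qed
  also have "\<dots> = (\<Sum>k\<le>p. (if k = 0 then x * (D ^^ p) y else 0) + (if k = p then y * (D ^^ p) x else 0))"
    using p2 by (intro sum.cong) auto
  also have "\<dots> = x * (D ^^ p) y + y * (D ^^ p) x" by (simp add: sum.distrib)
  finally show ?thesis .
qed

lemma frob: "(x + y) ^ p = x ^ p + (y::'a) ^ p"
proof -
  have "(x + y) ^ p = (\<Sum>k\<le>p. (if k = 0 then y ^ p else 0) + (if k = p then x ^ p else 0))"
    unfolding binomial_ring
  proof (rule sum.cong[OF refl])
    fix k assume "k \<in> {..p}"
    then show "of_nat (p choose k) * x ^ k * y ^ (p - k) =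
       (if k = 0 then y ^ p else 0) + (if k = p then x ^ p else 0)"
      using p2 by (cases "k = 0"; cases "k = p") (auto simp: choose_zero)
  qed
  also have "\<dots> = x ^ p + y ^ p" by (simp add: sum.distrib add.commute)
  finally show ?thesis .
qed

end


lemma Dn_phi:
  assumes "\<And>b x. D (phi b * x) = phi b * D x"
  shows "(D ^^ n) (phi b * x) = phi b * (D ^^ n) x"
  by (induction n) (auto simp: assms)

theorem mainTheorem15:
  fixes p :: nat
    and phi :: "'b::comm_ring_1 \<Rightarrow> 'a::comm_ring_1"
    and alpha :: "'m::comm_monoid_mult \<Rightarrow> 'a"
    and alphaS :: "'n::comm_monoid_mult \<Rightarrow> 'b"
    and beta :: "'n \<Rightarrow> 'm"
    and delta :: "'m \<Rightarrow> 'a"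
    and D :: "'a \<Rightarrow> 'a"
  assumes "prime p"
    and "of_nat p = (0::'a)"
    and "of_nat p = (0::'b)"
    and "log_morphism_data phi alpha alphaS beta"
    and "log_derivation phi alpha beta delta D"
  shows "log_derivation phi alpha beta
           (\<lambda>m. (D ^^ (p - 1)) (delta m) + delta m ^ p) (D ^^ p)"
proof -
  note L = assms(5)[unfolded log_derivation_def]
  interpret charp D p
    by unfold_locales (use L assms(1,2) in auto)
  have p0: "p > 0" using p2 by simp
  show ?thesis
    unfolding log_derivation_def
  proof (intro conjI allI)
    fix x y show "(D ^^ p) (x + y) = (D ^^ p) x + (D ^^ p) y" by (rule Dn_add)
  next
    fix b x show "(D ^^ p) (phi b * x) = phi b * (D ^^ p) x"
      by (rule Dn_phi) (use L in auto)
  next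
    fix x y show "(D ^^ p) (x * y) = x * (D ^^ p) y + y * (D ^^ p) x" by (rule leib_p)
  next
    show "(D ^^ (p - 1)) (delta 1) + delta 1 ^ p = 0" using L p0 by (simp add: zero_power)
  next
    fix m n
    show "(D ^^ (p - 1)) (delta (m * n)) + delta (m * n) ^ p =
          (D ^^ (p - 1)) (delta m) + delta m ^ p + ((D ^^ (p - 1)) (delta n) + delta n ^ p)"
      using L by (simp add: Dn_add frob algebra_simps)
  next
    fix n show "(D ^^ (p - 1)) (delta (beta n)) + delta (beta n) ^ p = 0" using L p0 by (simp add: zero_power)
  next
    fix m show "(D ^^ p) (alpha m) = alpha m * ((D ^^ (p - 1)) (delta m) + delta m ^ p)"
      by (rule hoch) (use L in auto)
  qed
qed

end
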